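(* Let $G$ be a torsion-free metrizable abelian topological group in which every cyclic subgroup is discrete. The following are equivalent: (i) $G$ is not NSS; (ii) $G$ contains a subgroup topologically isomorphic to $\mathbb{Z}^{(\mathbb{N})}$. If $G$ is also complete, then the following is equivalent to (i) and (ii): (iii) $G$ contains a subgroup topologically isomorphic to $\mathbb{Z}^{\mathbb{N}}$.
   Context: $\mathbb{Z}^{\mathbb{N}}$ carries the Tychonoff product topology with $\mathbb{Z}$ discrete, and $\mathbb{Z}^{(\mathbb{N})}$ is its subgroup of finitely supported sequences with the subspace topology. A topological group is NSS if it has a neighbourhood of the identity containing no non-trivial subgroup. *)

theory Defs
  imports "HOL-Analysis.Analysis"
begin

definition ab_topgroup :: "('a::ab_group_add) topology \<Rightarrow> bool" where
  "ab_topgroup T \<longleftrightarrow> topspace T = UNIV \<and>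
     continuous_map (prod_topology T T) T (\<lambda>(x, y). x + y) \<and>
     continuous_map T T uminus"

definition is_subgroup :: "('a::ab_group_add) set \<Rightarrow> bool" where
  "is_subgroup H \<longleftrightarrow> 0 \<in> H \<and> (\<forall>x\<in>H. \<forall>y\<in>H. x + y \<in> H) \<and> (\<forall>x\<in>H. - x \<in> H)"

definition gmult :: "nat \<Rightarrow> ('a::ab_group_add) \<Rightarrow> 'a" where
  "gmult n x = (((+) x) ^^ n) 0"

definition torsion_free :: "('a::ab_group_add) itself \<Rightarrow> bool" where
  "torsion_free _ \<longleftrightarrow> (\<forall>(x::'a) n. n > 0 \<and> gmult n x = 0 \<longrightarrow> x = 0)"

definition cyclic_subgroup :: "('a::ab_group_add) \<Rightarrow> 'a set" where
  "cyclic_subgroup x = {y. \<exists>n. y = gmult n x \<or> y = - gmult n x}"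

definition NSS :: "('a::ab_group_add) topology \<Rightarrow> bool" where
  "NSS T \<longleftrightarrow> (\<exists>U. (\<exists>V. openin T V \<and> 0 \<in> V \<and> V \<subseteq> U) \<and>
        (\<forall>H. is_subgroup H \<and> H \<subseteq> U \<longrightarrow> H = {0}))"

text \<open>Completeness of a (metrizable) abelian topological group with respect to its
  group uniformity, expressed with sequences: every group-Cauchy sequence converges.\<close>
definition group_complete :: "('a::ab_group_add) topology \<Rightarrow> bool" where
  "group_complete T \<longleftrightarrow> (\<forall>s::nat \<Rightarrow> 'a.
     (\<forall>U. openin T U \<and> 0 \<in> U \<longrightarrow> (\<exists>N. \<forall>m\<ge>N. \<forall>n\<ge>N. s m - s n \<in> U))
     \<longrightarrow> (\<exists>x. limitin T s x sequentially))"

definition ZN_top :: "(nat \<Rightarrow> int) topology" where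
  "ZN_top = product_topology (\<lambda>_. discrete_topology (UNIV :: int set)) UNIV"

definition ZN_fin :: "(nat \<Rightarrow> int) set" where
  "ZN_fin = {f. finite {n. f n \<noteq> 0}}"

definition contains_top_iso :: "('a::ab_group_add) topology \<Rightarrow> (nat \<Rightarrow> int) set \<Rightarrow> bool" where
  "contains_top_iso T S \<longleftrightarrow> (\<exists>H (\<phi>::(nat \<Rightarrow> int) \<Rightarrow> 'a).
     is_subgroup H \<and> H \<subseteq> topspace T \<and> \<phi> ` S = H \<and> inj_on \<phi> S \<and>
     (\<forall>f\<in>S. \<forall>g\<in>S. \<phi> (\<lambda>i. f i + g i) = \<phi> f + \<phi> g) \<and>
     homeomorphic_map (subtopology ZN_top S) (subtopology T H) \<phi>)"

end

theory Submission imports Defs begin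


lemma gmult_0[simp]: "gmult 0 x = 0" by (simp add: gmult_def)
lemma gmult_Suc: "gmult (Suc n) x = x + gmult n x" by (simp add: gmult_def)
lemma gmult_add: "gmult (m + n) x = gmult m x + gmult n x"
  by (induction m) (auto simp: gmult_Suc add.assoc)

definition zmul :: "int \<Rightarrow> 'a::ab_group_add \<Rightarrow> 'a" where
  "zmul k x = gmult (nat k) x - gmult (nat (-k)) x"

lemma zmul_eq: assumes "int p - int q = k" shows "zmul k x = gmult p x - gmult q x"
proof -
  have "p + nat (-k) = nat k + q" using assms by auto
  hence "gmult (p + nat (-k)) x = gmult (nat k + q) x" by simp
  hence "gmult p x + gmult (nat (-k)) x = gmult (nat k) x + gmult q x" by (simp add: gmult_add)
  thus ?thesis unfolding zmul_def by (simp add: algebra_simps)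
qed

lemma zmul_add: "zmul (a + b) x = zmul a x + zmul b x"
proof -
  have "zmul (a+b) x = gmult (nat a + nat b) x - gmult (nat (-a) + nat (-b)) x"
    by (rule zmul_eq) auto
  thus ?thesis by (simp add: zmul_def gmult_add algebra_simps)
qed

lemma zmul_0[simp]: "zmul 0 x = 0" by (simp add: zmul_def)
lemma zmul_neg: "zmul (-k) x = - zmul k x" by (simp add: zmul_def)

lemma zmul_cyclic: "zmul k x \<in> cyclic_subgroup x"
  unfolding cyclic_subgroup_def zmul_def
  by (cases "k \<ge> 0") auto

lemma gmult_subgroup: "is_subgroup H \<Longrightarrow> x \<in> H \<Longrightarrow> gmult n x \<in> H"
  by (induction n) (auto simp: is_subgroup_def gmult_Suc)

lemma cyclic_sub: "is_subgroup H \<Longrightarrow> x \<in> H \<Longrightarrow> cyclic_subgroup x \<subseteq> H"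
proof
  fix y assume H: "is_subgroup H" "x \<in> H" and "y \<in> cyclic_subgroup x"
  then obtain n where "y = gmult n x \<or> y = - gmult n x" unfolding cyclic_subgroup_def by blast
  moreover have "gmult n x \<in> H" using gmult_subgroup[OF H] .
  ultimately show "y \<in> H" using H(1) unfolding is_subgroup_def by blast
qed

lemma cyclic_0: "0 \<in> cyclic_subgroup x"
  unfolding cyclic_subgroup_def by (rule CollectI, rule exI[of _ 0]) simp

lemma zmul_torsion: assumes "torsion_free TYPE('a)" "zmul k (x::'a::ab_group_add) = 0" "x \<noteq> 0"
  shows "k = 0"
proof (rule ccontr)
  assume k: "k \<noteq> 0"
  show False
  proof (cases "k > 0")
    case True
    hence "gmult (nat k) x = 0" using assms(2) by (simp add: zmul_def)
    moreover have "nat k > 0" using True by simp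
    ultimately show False using assms(1,3) unfolding torsion_free_def by blast
  next
    case False
    hence "gmult (nat (-k)) x = 0" using assms(2) k by (simp add: zmul_def)
    moreover have "nat (-k) > 0" using False k by simp
    ultimately show False using assms(1,3) unfolding torsion_free_def by blast
  qed
qed



locale tgrp = fixes T :: "'a::ab_group_add topology" assumes tg: "ab_topgroup T"
begin

lemma top_UNIV[simp]: "topspace T = UNIV" using tg by (simp add: ab_topgroup_def)
lemma cont_add: "continuous_map (prod_topology T T) T (\<lambda>(x, y). x + y)" using tg by (simp add: ab_topgroup_def)
lemma cont_neg: "continuous_map T T uminus" using tg by (simp add: ab_topgroup_def)

lemma cont_sum2: assumes "continuous_map X T f" "continuous_map X T g"
  shows "continuous_map X T (\<lambda>z. f z + g z)"
proof -
  have "continuous_map X (prod_topology T T) (\<lambda>z. (f z, g z))"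
    using assms by (rule continuous_map_pairedI)
  from continuous_map_compose[OF this cont_add] show ?thesis by (simp add: o_def)
qed

lemma cont_transl: "continuous_map T T (\<lambda>z. a + z)"
  by (rule cont_sum2) (auto simp: continuous_map_id[unfolded id_def])

lemma cont_subl: "continuous_map T T (\<lambda>z. a - z)"
proof -
  have "continuous_map T T (\<lambda>z. a + (- z))"
    by (rule cont_sum2) (auto simp: cont_neg[unfolded id_def])
  thus ?thesis by simp
qed

lemma open_transl: "openin T U \<Longrightarrow> openin T {z. a + z \<in> U}"
  using openin_continuous_map_preimage[OF cont_transl, of U a] by simp

lemma open_neg: "openin T U \<Longrightarrow> openin T {z. - z \<in> U}"
  using openin_continuous_map_preimage[OF cont_neg, of U] by simp

lemma nbhd_half:
  assumes "openin T U" "0 \<in> U"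
  shows "\<exists>V. openin T V \<and> 0 \<in> V \<and> (\<forall>v\<in>V. -v \<in> V) \<and> (\<forall>u\<in>V. \<forall>v\<in>V. u + v \<in> U)"
proof -
  have "openin (prod_topology T T) {p \<in> topspace (prod_topology T T). (\<lambda>(x, y). x + y) p \<in> U}"
    using openin_continuous_map_preimage[OF cont_add assms(1)] .
  hence o: "openin (prod_topology T T) {p. fst p + snd p \<in> U}" by (simp add: case_prod_beta)
  have z: "(0,0) \<in> {p. fst p + snd p \<in> U}" using assms by simp
  have "\<exists>V1 V2. openin T V1 \<and> openin T V2 \<and> 0 \<in> V1 \<and> 0 \<in> V2 \<and> V1 \<times> V2 \<subseteq> {p. fst p + snd p \<in> U}"
    using o[unfolded openin_prod_topology_alt, rule_format, OF z] .
  then obtain V1 V2 where V: "openin T V1" "openin T V2" "0 \<in> V1" "0 \<in> V2"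
    "V1 \<times> V2 \<subseteq> {p. fst p + snd p \<in> U}" by blast
  define V0 where "V0 = V1 \<inter> V2"
  define V where "V = V0 \<inter> {z. - z \<in> V0}"
  have "openin T V0" using V by (simp add: V0_def openin_Int)
  hence "openin T V" unfolding V_def using open_neg by (simp add: openin_Int)
  moreover have "0 \<in> V" using V by (simp add: V_def V0_def)
  moreover have "\<forall>v\<in>V. -v \<in> V" by (auto simp: V_def)
  moreover have "\<forall>u\<in>V. \<forall>v\<in>V. u + v \<in> U" using V(5) by (auto simp: V_def V0_def)
  ultimately show ?thesis by blast
qed

lemma limit_subl: "limitin T f y F \<Longrightarrow> limitin T (\<lambda>m. a - f m) (a - y) F"
  using continuous_map_limit[OF cont_subl] by (simp add: o_def)

lemma limit_add: assumes "limitin T f y F" "limitin T g z F"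
  shows "limitin T (\<lambda>m. f m + g m) (y + z) F"
proof -
  have "limitin (prod_topology T T) (\<lambda>m. (f m, g m)) (y, z) F"
    using assms by (simp add: limitin_pairwise o_def)
  from continuous_map_limit[OF cont_add this] show ?thesis by (simp add: o_def)
qed

end


lemma bspec_exI_helper: "\<forall>x\<in>A. P U x \<Longrightarrow> \<forall>x\<in>A. \<exists>U. P U x" by blast

definition cyl :: "(nat \<Rightarrow> int) \<Rightarrow> nat \<Rightarrow> (nat \<Rightarrow> int) set" where
  "cyl f N = {g. \<forall>i<N. g i = f i}"

lemma open_cyl: "openin ZN_top (cyl f N)"
proof -
  define U where "U = (\<lambda>i::nat. if i < N then {f i} else (UNIV::int set))"
  have e: "PiE UNIV U = cyl f N" by (auto simp: U_def cyl_def PiE_def Pi_def)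
  have "finite {i. U i \<noteq> UNIV}" by (rule finite_subset[of _ "{..<N}"]) (auto simp: U_def)
  hence fin: "finite {i \<in> UNIV. U i \<noteq> topspace (discrete_topology (UNIV::int set))}" by simp
  have op: "\<forall>i\<in>UNIV. openin (discrete_topology (UNIV::int set)) (U i)" by (simp add: U_def)
  have "openin (product_topology (\<lambda>_. discrete_topology (UNIV :: int set)) UNIV) (PiE UNIV U)"
    unfolding openin_product_topology_alt
  proof (rule ballI)
    fix x assume x: "x \<in> PiE UNIV U"
    show "\<exists>U'. finite {i \<in> UNIV. U' i \<noteq> topspace (discrete_topology (UNIV::int set))} \<and>
                 (\<forall>i \<in> UNIV. openin (discrete_topology UNIV) (U' i)) \<and> x \<in> Pi\<^sub>E UNIV U' \<and> Pi\<^sub>E UNIV U' \<subseteq> PiE UNIV U"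
      apply (rule exI[of _ U], intro conjI order_refl)
        apply (fact fin) apply (fact op) apply (fact x) done
  qed
  thus ?thesis unfolding ZN_top_def e .
qed

lemma open_ZN_cyl: assumes "openin ZN_top Op" "f \<in> Op" shows "\<exists>N. cyl f N \<subseteq> Op"
proof -
  have "\<forall>x\<in>Op. \<exists>U. finite {i \<in> UNIV. U i \<noteq> topspace (discrete_topology (UNIV::int set))} \<and>
                 (\<forall>i \<in> UNIV. openin (discrete_topology UNIV) (U i)) \<and> x \<in> Pi\<^sub>E UNIV U \<and> Pi\<^sub>E UNIV U \<subseteq> Op"
    using assms(1) unfolding ZN_top_def openin_product_topology_alt .
  then obtain U where U0: "finite {i \<in> UNIV. U i \<noteq> topspace (discrete_topology (UNIV::int set))}"
     "f \<in> PiE UNIV U" "PiE UNIV U \<subseteq> Op" using assms(2) by blast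
  have U: "finite {i. U i \<noteq> UNIV}" "f \<in> PiE UNIV U" "PiE UNIV U \<subseteq> Op" using U0 by auto
  obtain N where N: "{i. U i \<noteq> UNIV} \<subseteq> {..<N}" using finite_nat_bounded[OF U(1)] by blast
  have "cyl f N \<subseteq> PiE UNIV U"
  proof
    fix g assume g: "g \<in> cyl f N"
    have "g i \<in> U i" for i
    proof (cases "i < N")
      case True thus ?thesis using g U(2) by (auto simp: cyl_def)
    next
      case False thus ?thesis using N by auto
    qed
    thus "g \<in> PiE UNIV U" by auto
  qed
  thus ?thesis using U(3) by blast
qed

lemma openin_sub_ZN: "openin (subtopology ZN_top S) U \<longleftrightarrow>
   U \<subseteq> S \<and> (\<forall>f\<in>U. \<exists>N. \<forall>g\<in>S. (\<forall>i<N. g i = f i) \<longrightarrow> g \<in> U)"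
proof
  assume "openin (subtopology ZN_top S) U"
  then obtain Op where Op: "openin ZN_top Op" "U = Op \<inter> S" by (auto simp: openin_subtopology)
  show "U \<subseteq> S \<and> (\<forall>f\<in>U. \<exists>N. \<forall>g\<in>S. (\<forall>i<N. g i = f i) \<longrightarrow> g \<in> U)"
  proof (intro conjI ballI)
    fix f assume "f \<in> U"
    then obtain N where "cyl f N \<subseteq> Op" using open_ZN_cyl Op by blast
    thus "\<exists>N. \<forall>g\<in>S. (\<forall>i<N. g i = f i) \<longrightarrow> g \<in> U" using Op by (auto simp: cyl_def)
  qed (use Op in auto)
next
  assume H: "U \<subseteq> S \<and> (\<forall>f\<in>U. \<exists>N. \<forall>g\<in>S. (\<forall>i<N. g i = f i) \<longrightarrow> g \<in> U)"
  show "openin (subtopology ZN_top S) U"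
  proof (subst openin_subopen, intro ballI)
    fix f assume "f \<in> U"
    then obtain N where N: "\<forall>g\<in>S. (\<forall>i<N. g i = f i) \<longrightarrow> g \<in> U" using H by blast
    have "openin (subtopology ZN_top S) (cyl f N \<inter> S)"
      using open_cyl by (auto simp: openin_subtopology)
    moreover have "f \<in> cyl f N \<inter> S" using H \<open>f \<in> U\<close> by (auto simp: cyl_def)
    moreover have "cyl f N \<inter> S \<subseteq> U" using N by (auto simp: cyl_def)
    ultimately show "\<exists>T. openin (subtopology ZN_top S) T \<and> f \<in> T \<and> T \<subseteq> U" by blast
  qed
qed

lemma topspace_ZN[simp]: "topspace ZN_top = UNIV"
  by (simp add: ZN_top_def)



lemma metric_base:
  assumes "metrizable_space X" "x \<in> topspace X"
  shows "\<exists>B::nat \<Rightarrow> _ set. (\<forall>n. openin X (B n) \<and> x \<in> B n) \<and>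
           (\<forall>U. openin X U \<and> x \<in> U \<longrightarrow> (\<exists>n. B n \<subseteq> U))"
proof -
  obtain M d where Md: "Metric_space M d" "X = Metric_space.mtopology M d"
    using assms(1) unfolding metrizable_space_def by blast
  interpret Metric_space M d by (fact Md(1))
  have xM: "x \<in> M" using assms(2) Md(2) by simp
  define B where "B n = mball x (inverse (real (Suc n)))" for n
  have "\<forall>n. openin X (B n) \<and> x \<in> B n" using xM by (simp add: B_def Md(2))
  moreover have "\<exists>n. B n \<subseteq> U" if UU: "openin X U" "x \<in> U" for U
  proof -
    obtain r where r: "r > 0" "mball x r \<subseteq> U" using UU unfolding Md(2) openin_mtopology by blast
    obtain n where n: "inverse (real (Suc n)) < r" using reals_Archimedean[OF r(1)] by auto
    have "B n \<subseteq> mball x r" unfolding B_def using n by (intro mball_subset_concentric) simp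
    thus ?thesis using r by blast
  qed
  ultimately show ?thesis by blast
qed

definition four_ok :: "'a::ab_group_add set \<Rightarrow> 'a set \<Rightarrow> bool" where
  "four_ok W A \<longleftrightarrow> (\<forall>a\<in>A. \<forall>u1\<in>W. \<forall>u2\<in>W. \<forall>u3\<in>W. \<forall>u4\<in>W. a = u1 + u2 + u3 + u4 \<longrightarrow> a = 0)"

definition extg :: "'a::ab_group_add set \<Rightarrow> 'a \<Rightarrow> 'a set" where
  "extg A x = {a + zmul k x | a k. a \<in> A}"

lemma extg_subgroup: assumes "is_subgroup A" shows "is_subgroup (extg A x)"
  unfolding is_subgroup_def
proof (intro conjI ballI)
  show "0 \<in> extg A x" using assms unfolding extg_def is_subgroup_def
    by (intro CollectI exI[of _ 0] exI[of _ "0::int"]) simp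
next
  fix y z assume "y \<in> extg A x" "z \<in> extg A x"
  then obtain a k b l where "a \<in> A" "b \<in> A" "y = a + zmul k x" "z = b + zmul l x"
    unfolding extg_def by blast
  moreover have "a + zmul k x + (b + zmul l x) = (a + b) + zmul (k + l) x" by (simp add: zmul_add algebra_simps)
  moreover have "a + b \<in> A" using assms \<open>a \<in> A\<close> \<open>b \<in> A\<close> unfolding is_subgroup_def by blast
  ultimately show "y + z \<in> extg A x" unfolding extg_def by blast
next
  fix y assume "y \<in> extg A x"
  then obtain a k where "a \<in> A" "y = a + zmul k x" unfolding extg_def by blast
  moreover have "- (a + zmul k x) = (- a) + zmul (-k) x" by (simp add: zmul_neg)
  moreover have "- a \<in> A" using assms \<open>a \<in> A\<close> unfolding is_subgroup_def by blast
  ultimately show "- y \<in> extg A x" unfolding extg_def by blast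
qed

lemma extg_mem: "a \<in> A \<Longrightarrow> a + zmul k x \<in> extg A x"
  unfolding extg_def by blast

locale nss = tgrp T for T :: "'a::ab_group_add topology" +
  assumes tf: "torsion_free TYPE('a::ab_group_add)" and met: "metrizable_space T"
    and disc: "\<forall>x. subtopology T (cyclic_subgroup x) = discrete_topology (cyclic_subgroup x)"
    and notnss: "\<not> NSS T"
begin

definition P :: "'a set \<Rightarrow> 'a set \<Rightarrow> bool" where
  "P W A \<longleftrightarrow> openin T W \<and> 0 \<in> W \<and> (\<forall>v\<in>W. -v \<in> W) \<and> is_subgroup A \<and> four_ok W A"

definition Q :: "'a set \<Rightarrow> 'a set \<Rightarrow> 'a set \<Rightarrow> 'a \<Rightarrow> 'a set \<Rightarrow> bool" where
  "Q W A B x W' \<longleftrightarrow> x \<noteq> 0 \<and> cyclic_subgroup x \<subseteq> W \<and> P W' (extg A x) \<and>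
     (\<forall>u\<in>W'. \<forall>v\<in>W'. u + v \<in> W) \<and> W' \<subseteq> B \<and> (\<forall>a\<in>A. \<forall>k. a + zmul k x = 0 \<longrightarrow> k = 0)"

lemma subgroup_in: assumes "openin T W" "0 \<in> W"
  shows "\<exists>x. x \<noteq> 0 \<and> cyclic_subgroup x \<subseteq> W"
proof -
  have "\<not> (\<forall>H. is_subgroup H \<and> H \<subseteq> W \<longrightarrow> H = {0})"
    using notnss assms unfolding NSS_def by blast
  then obtain H where H: "is_subgroup H" "H \<subseteq> W" "H \<noteq> {0}" by blast
  have "0 \<in> H" using H(1) unfolding is_subgroup_def by blast
  then obtain x where "x \<in> H" "x \<noteq> 0" using H(3) by blast
  thus ?thesis using cyclic_sub[OF H(1)] H(2) by blast
qed

lemma disc_nbhd: "\<exists>D. openin T D \<and> D \<inter> cyclic_subgroup x = {0}"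
proof -
  have "openin (discrete_topology (cyclic_subgroup x)) {0}" using cyclic_0[of x] by simp
  hence "openin (subtopology T (cyclic_subgroup x)) {0}" using disc by simp
  then obtain D where "openin T D" "{0} = D \<inter> cyclic_subgroup x" unfolding openin_subtopology by blast
  thus ?thesis by auto
qed

lemma step:
  assumes PWA: "P W A" and B: "openin T B" "0 \<in> B"
  shows "\<exists>x W'. Q W A B x W'"
proof -
  have W: "openin T W" "0 \<in> W" "\<forall>v\<in>W. -v \<in> W" and A: "is_subgroup A" and f: "four_ok W A"
    using PWA unfolding P_def by auto
  obtain x where x: "x \<noteq> 0" "cyclic_subgroup x \<subseteq> W" using subgroup_in W by blast
  from disc_nbhd[of x] obtain D where D: "openin T D" "D \<inter> cyclic_subgroup x = {0}" by blast
  have zW: "zmul k x \<in> W" for k using x(2) zmul_cyclic by blast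
  have a0: "a = 0" if "a \<in> A" "a \<in> W" for a
    using f that W(2) unfolding four_ok_def by (metis add.right_neutral)
  have indep: "\<forall>a\<in>A. \<forall>k. a + zmul k x = 0 \<longrightarrow> k = 0"
  proof (intro ballI allI impI)
    fix a k assume "a \<in> A" "a + zmul k x = 0"
    hence "a = zmul (-k) x" by (simp add: zmul_neg eq_neg_iff_add_eq_0)
    hence "a = 0" using a0 \<open>a \<in> A\<close> zW by simp
    hence "zmul k x = 0" using \<open>a + zmul k x = 0\<close> by simp
    thus "k = 0" using zmul_torsion[OF tf _ x(1)] by blast
  qed
  define D' where "D' = D \<inter> W \<inter> B"
  have D': "openin T D'" "0 \<in> D'" using D W B cyclic_0[of x] unfolding D'_def by auto
  have c2: "e = 0" if ee: "e \<in> extg A x" "e \<in> D'" for e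
  proof -
    obtain a k where ak: "a \<in> A" "e = a + zmul k x" using ee(1) unfolding extg_def by blast
    have "e \<in> W" using ee(2) unfolding D'_def by blast
    have "a = e + zmul (-k) x + 0 + 0" using ak by (simp add: zmul_neg)
    hence "a = 0" using f ak(1) \<open>e \<in> W\<close> zW W(2) unfolding four_ok_def by blast
    hence "e = zmul k x" using ak by simp
    hence "e \<in> D \<inter> cyclic_subgroup x" using ee(2) zmul_cyclic unfolding D'_def by blast
    thus "e = 0" using D(2) by blast
  qed
  obtain V1 where V1: "openin T V1" "0 \<in> V1" "\<forall>v\<in>V1. -v \<in> V1" "\<forall>u\<in>V1. \<forall>v\<in>V1. u + v \<in> D'"
    using nbhd_half[OF D'] by blast
  obtain V2 where V2: "openin T V2" "0 \<in> V2" "\<forall>v\<in>V2. -v \<in> V2" "\<forall>u\<in>V2. \<forall>v\<in>V2. u + v \<in> V1"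
    using nbhd_half[OF V1(1,2)] by blast
  have V1D: "v \<in> D'" if "v \<in> V1" for v using V1(4) V1(2) that by (metis add.right_neutral)
  have V2V1: "v \<in> V1" if "v \<in> V2" for v using V2(4) V2(2) that by (metis add.right_neutral)
  have "P V2 (extg A x)"
    unfolding P_def
  proof (intro conjI)
    show "is_subgroup (extg A x)" using extg_subgroup[OF A] .
    show "four_ok V2 (extg A x)" unfolding four_ok_def
    proof (intro ballI impI)
      fix a u1 u2 u3 u4 assume "a \<in> extg A x" "u1 \<in> V2" "u2 \<in> V2" "u3 \<in> V2" "u4 \<in> V2"
        "a = u1 + u2 + u3 + u4"
      hence "a = (u1 + u2) + (u3 + u4)" by (simp add: add.assoc)
      moreover have "u1 + u2 \<in> V1" "u3 + u4 \<in> V1" using V2(4) \<open>u1 \<in> V2\<close> \<open>u2 \<in> V2\<close> \<open>u3 \<in> V2\<close> \<open>u4 \<in> V2\<close> by auto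
      ultimately have "a \<in> D'" using V1(4) by simp
      thus "a = 0" using c2 \<open>a \<in> extg A x\<close> by blast
    qed
  qed (use V2 in auto)
  moreover have "\<forall>u\<in>V2. \<forall>v\<in>V2. u + v \<in> W" using V2(4) V1D unfolding D'_def by blast
  moreover have "V2 \<subseteq> B" using V2V1 V1D unfolding D'_def by blast
  ultimately have "Q W A B x V2" unfolding Q_def using x indep by blast
  thus ?thesis by blast
qed

lemma P_init: "P UNIV {0}"
  unfolding P_def four_ok_def is_subgroup_def
  using openin_topspace[of T] by simp

lemma construction:
  obtains B :: "nat \<Rightarrow> 'a set" and x :: "nat \<Rightarrow> 'a" and W A :: "nat \<Rightarrow> 'a set" where
   "\<forall>n. openin T (B n) \<and> 0 \<in> B n" "\<forall>U. openin T U \<and> 0 \<in> U \<longrightarrow> (\<exists>n. B n \<subseteq> U)"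
   "A 0 = {0}" "\<forall>n. P (W n) (A n)" "\<forall>n. Q (W n) (A n) (B n) (x n) (W (Suc n))"
   "\<forall>n. A (Suc n) = extg (A n) (x n)"
proof -
  obtain B :: "nat \<Rightarrow> 'a set" where B: "\<forall>n. openin T (B n) \<and> 0 \<in> B n"
     "\<forall>U. openin T U \<and> 0 \<in> U \<longrightarrow> (\<exists>n. B n \<subseteq> U)"
    using metric_base[OF met, of 0] by auto
  define pick where "pick n p = (SOME q. Q (fst p) (snd p) (B n) (fst q) (snd q))" for n p
  define st where "st = rec_nat (UNIV, {0}) (\<lambda>n p. (snd (pick n p), extg (snd p) (fst (pick n p))))"
  have st0: "st 0 = (UNIV, {0})" by (simp add: st_def)
  have stS: "st (Suc n) = (snd (pick n (st n)), extg (snd (st n)) (fst (pick n (st n))))" for n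
    by (simp add: st_def)
  have pk: "Q (fst p) (snd p) (B n) (fst (pick n p)) (snd (pick n p))" if Pp: "P (fst p) (snd p)" for n p
  proof -
    obtain x W' where "Q (fst p) (snd p) (B n) x W'" using step[OF Pp] B(1) by blast
    hence "\<exists>q. Q (fst p) (snd p) (B n) (fst q) (snd q)" by (intro exI[of _ "(x, W')"]) simp
    thus ?thesis unfolding pick_def by (rule someI_ex)
  qed
  have Pst: "P (fst (st n)) (snd (st n))" for n
  proof (induction n)
    case 0 thus ?case using P_init by (simp add: st0)
  next
    case (Suc n)
    from pk[OF this, of n] have "P (snd (pick n (st n))) (extg (snd (st n)) (fst (pick n (st n))))"
      unfolding Q_def by blast
    thus ?case by (simp add: stS)
  qed
  show ?thesis
  proof (rule that[OF B, of "\<lambda>n. snd (st n)" "\<lambda>n. fst (st n)" "\<lambda>n. fst (pick n (st n))"])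
    show "snd (st 0) = {0}" by (simp add: st0)
    show "\<forall>n. P (fst (st n)) (snd (st n))" using Pst by blast
    show "\<forall>n. Q (fst (st n)) (snd (st n)) (B n) (fst (pick n (st n))) (fst (st (Suc n)))"
      using pk[OF Pst] by (simp add: stS)
    show "\<forall>n. snd (st (Suc n)) = extg (snd (st n)) (fst (pick n (st n)))" by (simp add: stS)
  qed
qed

end


locale emb = nss T for T :: "'a::ab_group_add topology" +
  fixes B :: "nat \<Rightarrow> 'a set" and x :: "nat \<Rightarrow> 'a" and W A :: "nat \<Rightarrow> 'a set"
  assumes B1: "\<forall>n. openin T (B n) \<and> 0 \<in> B n"
    and B2: "\<forall>U. openin T U \<and> 0 \<in> U \<longrightarrow> (\<exists>n. B n \<subseteq> U)"
    and A0: "A 0 = {0}" and PW: "\<forall>n. P (W n) (A n)"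
    and QW: "\<forall>n. Q (W n) (A n) (B n) (x n) (W (Suc n))"
    and AS: "\<forall>n. A (Suc n) = extg (A n) (x n)"
begin

lemma Wopen: "openin T (W n)" and W0: "0 \<in> W n" and Wneg: "v \<in> W n \<Longrightarrow> -v \<in> W n"
  and Asub: "is_subgroup (A n)" and four: "four_ok (W n) (A n)"
  using PW[rule_format, of n] unfolding P_def by blast+

lemma Qn: "x n \<noteq> 0 \<and> cyclic_subgroup (x n) \<subseteq> W n \<and> P (W (Suc n)) (extg (A n) (x n)) \<and>
     (\<forall>u\<in>W (Suc n). \<forall>v\<in>W (Suc n). u + v \<in> W n) \<and> W (Suc n) \<subseteq> B n \<and> (\<forall>a\<in>A n. \<forall>k. a + zmul k (x n) = 0 \<longrightarrow> k = 0)"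
  using QW[rule_format, of n] unfolding Q_def .

lemma xnz: "x n \<noteq> 0" using Qn by blast
lemma cycW: "cyclic_subgroup (x n) \<subseteq> W n" using Qn[of n, THEN conjunct2, THEN conjunct1] .
lemma Wadd: "u \<in> W (Suc n) \<Longrightarrow> v \<in> W (Suc n) \<Longrightarrow> u + v \<in> W n"
  using Qn[of n, THEN conjunct2, THEN conjunct2, THEN conjunct2, THEN conjunct1] by simp
lemma WB: "W (Suc n) \<subseteq> B n" using Qn[of n, THEN conjunct2, THEN conjunct2, THEN conjunct2, THEN conjunct2, THEN conjunct1] .
lemma indep: "a \<in> A n \<Longrightarrow> a + zmul k (x n) = 0 \<Longrightarrow> k = 0"
  using Qn[of n, THEN conjunct2, THEN conjunct2, THEN conjunct2, THEN conjunct2, THEN conjunct2] by simp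

lemma WSuc: "W (Suc n) \<subseteq> W n"
proof
  fix v assume "v \<in> W (Suc n)"
  thus "v \<in> W n" using Wadd[of v n 0] W0 by simp
qed

lemma term_in: "zmul k (x n) \<in> W n" using cycW zmul_cyclic by blast

definition s :: "nat \<Rightarrow> (nat \<Rightarrow> int) \<Rightarrow> 'a" where
  "s m c = (\<Sum>i<m. zmul (c i) (x i))"

lemma s_0[simp]: "s 0 c = 0" by (simp add: s_def)
lemma s_Suc: "s (Suc m) c = s m c + zmul (c m) (x m)" by (simp add: s_def add.commute)

lemma s_in_A: "s n c \<in> A n"
proof (induction n)
  case 0 thus ?case using A0 by simp
next
  case (Suc n) thus ?case using AS by (simp add: s_Suc extg_mem)
qed

lemma s_zero: "s n c = 0 \<Longrightarrow> \<forall>i<n. c i = 0"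
proof (induction n)
  case 0 thus ?case by simp
next
  case (Suc n)
  have "c n = 0" using indep[OF s_in_A[of n c]] Suc.prems by (simp add: s_Suc)
  hence "s n c = 0" using Suc.prems by (simp add: s_Suc)
  hence "\<forall>i<n. c i = 0" using Suc.IH by blast
  thus ?case using \<open>c n = 0\<close> less_Suc_eq by auto
qed

lemma tail0: "s (Suc k + d) c - s (Suc k) c \<in> W k"
proof (induction d arbitrary: k)
  case 0 thus ?case using W0 by simp
next
  case (Suc d)
  have e: "s (Suc k + Suc d) c - s (Suc k) c =
        zmul (c (Suc k)) (x (Suc k)) + (s (Suc (Suc k) + d) c - s (Suc (Suc k)) c)"
    by (simp add: s_Suc[of "Suc k"] algebra_simps)
  show ?case unfolding e by (rule Wadd[OF term_in Suc.IH])
qed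

lemma tail: "Suc k \<le> m \<Longrightarrow> s m c - s (Suc k) c \<in> W k"
  using tail0[of k "m - Suc k" c] by simp

lemma lim_tail:
  assumes "limitin T (\<lambda>m. s m c) y sequentially"
  shows "\<exists>u v. u \<in> W k \<and> v \<in> W k \<and> y - s (Suc k) c = u + v"
proof -
  have "limitin T (\<lambda>m. y - s m c) (y - y) sequentially" using limit_subl[OF assms] .
  hence "\<exists>N. \<forall>n. N \<le> n \<longrightarrow> y - s n c \<in> W k"
    unfolding limitin_sequentially using Wopen W0 by simp
  then obtain N where N: "\<forall>n. N \<le> n \<longrightarrow> y - s n c \<in> W k" by blast
  define m where "m = max N (Suc k)"
  have "y - s m c \<in> W k" using N by (simp add: m_def)
  moreover have "s m c - s (Suc k) c \<in> W k" using tail by (simp add: m_def)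
  moreover have "y - s (Suc k) c = (y - s m c) + (s m c - s (Suc k) c)" by simp
  ultimately show ?thesis by blast
qed

lemma key:
  assumes "limitin T (\<lambda>m. s m c) y sequentially" "y \<in> W N"
  shows "\<forall>i<N. c i = 0"
proof -
  obtain u v where uv: "u \<in> W N" "v \<in> W N" "y - s (Suc N) c = u + v" using lim_tail[OF assms(1)] by blast
  have "s N c = y + (- zmul (c N) (x N)) + (- u) + (- v)"
    using uv(3) by (simp add: s_Suc algebra_simps)
  moreover have "- zmul (c N) (x N) \<in> W N" "- u \<in> W N" "- v \<in> W N"
    using Wneg term_in uv by auto
  ultimately have "s N c = 0" using four[of N] s_in_A[of N c] assms(2) unfolding four_ok_def by blast
  thus ?thesis by (rule s_zero)
qed

lemma s_zeros: "\<forall>i<n. c i = 0 \<Longrightarrow> s n c = 0"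
  by (simp add: s_def)

lemma small:
  assumes "limitin T (\<lambda>m. s m c) y sequentially" "\<forall>i<Suc (Suc k). c i = 0"
  shows "y \<in> W k"
proof -
  obtain u v where uv: "u \<in> W (Suc k)" "v \<in> W (Suc k)" "y - s (Suc (Suc k)) c = u + v"
    using lim_tail[OF assms(1)] by blast
  have "y = u + v" using uv(3) s_zeros[OF assms(2)] by simp
  thus ?thesis using Wadd uv by simp
qed

lemma Wsmall: "openin T U \<Longrightarrow> 0 \<in> U \<Longrightarrow> \<exists>n. W n \<subseteq> U"
proof -
  assume "openin T U" "0 \<in> U"
  then obtain n where "B n \<subseteq> U" using B2 by blast
  thus ?thesis using WB[of n] by blast
qed

lemma cauchy: "openin T U \<Longrightarrow> 0 \<in> U \<Longrightarrow> \<exists>N. \<forall>m\<ge>N. \<forall>n\<ge>N. s m c - s n c \<in> U"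
proof -
  assume "openin T U" "0 \<in> U"
  then obtain n0 where n0: "W n0 \<subseteq> U" using Wsmall by blast
  have "s m c - s n c \<in> U" if "m \<ge> Suc (Suc n0)" "n \<ge> Suc (Suc n0)" for m n
  proof -
    have a: "s m c - s (Suc (Suc n0)) c \<in> W (Suc n0)" using tail that by blast
    have b: "- (s n c - s (Suc (Suc n0)) c) \<in> W (Suc n0)" using tail that Wneg by blast
    have "s m c - s n c = (s m c - s (Suc (Suc n0)) c) + - (s n c - s (Suc (Suc n0)) c)" by simp
    thus ?thesis using Wadd[OF a b] n0 by auto
  qed
  thus ?thesis by blast
qed

lemma s_add: "s m (\<lambda>i. f i + g i) = s m f + s m g"
  by (simp add: s_def zmul_add sum.distrib)
lemma s_neg: "s m (\<lambda>i. - f i) = - s m f"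
  by (simp add: s_def zmul_neg sum_negf)

lemma fin_lim: assumes "finite {n. c n \<noteq> 0}" shows "\<exists>y. limitin T (\<lambda>m. s m c) y sequentially"
proof -
  obtain M where M: "{n. c n \<noteq> 0} \<subseteq> {..<M}" using finite_nat_bounded[OF assms] by blast
  have "s (M + d) c = s M c" for d
  proof (induction d)
    case (Suc d)
    have "c (M + d) = 0" using M by force
    thus ?case using Suc by (simp add: s_Suc)
  qed simp
  note sd = this
  have ev: "\<forall>m\<ge>M. s m c = s M c"
  proof (intro allI impI)
    fix m assume "M \<le> m"
    hence "m = M + (m - M)" by simp
    thus "s m c = s M c" using sd[of "m - M"] by simp
  qed
  have "limitin T (\<lambda>m. s m c) (s M c) sequentially"
    by (rule limitin_eventually) (simp, unfold eventually_sequentially, use ev in blast)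
  thus ?thesis by blast
qed

end


context emb begin

definition phi :: "(nat \<Rightarrow> int) \<Rightarrow> 'a" where
  "phi c = (SOME y. limitin T (\<lambda>m. s m c) y sequentially)"

lemma haus: "Hausdorff_space T" using metrizable_imp_Hausdorff_space[OF met] .

lemma phi_lim: "\<exists>y. limitin T (\<lambda>m. s m c) y sequentially \<Longrightarrow> limitin T (\<lambda>m. s m c) (phi c) sequentially"
  unfolding phi_def by (rule someI_ex)

lemma lim_uniq: "limitin T f y sequentially \<Longrightarrow> limitin T f z sequentially \<Longrightarrow> y = z"
  by (rule limitin_Hausdorff_unique[OF _ _ sequentially_bot haus])

context
  fixes S :: "(nat \<Rightarrow> int) set"
  assumes S0: "(\<lambda>_. 0) \<in> S"
    and Sadd: "\<And>f g. f \<in> S \<Longrightarrow> g \<in> S \<Longrightarrow> (\<lambda>i. f i + g i) \<in> S"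
    and Sneg: "\<And>f. f \<in> S \<Longrightarrow> (\<lambda>i. - f i) \<in> S"
    and Slim: "\<And>f. f \<in> S \<Longrightarrow> \<exists>y. limitin T (\<lambda>m. s m f) y sequentially"
begin

lemma limS: "f \<in> S \<Longrightarrow> limitin T (\<lambda>m. s m f) (phi f) sequentially"
  using phi_lim Slim by blast

lemma phi_add: assumes "f \<in> S" "g \<in> S" shows "phi (\<lambda>i. f i + g i) = phi f + phi g"
proof -
  have "limitin T (\<lambda>m. s m f + s m g) (phi f + phi g) sequentially"
    using limit_add[OF limS[OF assms(1)] limS[OF assms(2)]] .
  hence "limitin T (\<lambda>m. s m (\<lambda>i. f i + g i)) (phi f + phi g) sequentially" by (simp add: s_add)
  thus ?thesis using lim_uniq limS[OF Sadd[OF assms]] by blast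
qed

lemma Sdiff: "f \<in> S \<Longrightarrow> g \<in> S \<Longrightarrow> (\<lambda>i. g i - f i) \<in> S"
  using Sadd[OF _ Sneg, of g f] by simp

lemma phi_diff: assumes "f \<in> S" "g \<in> S" shows "phi g = phi f + phi (\<lambda>i. g i - f i)"
proof -
  have "phi (\<lambda>i. f i + (g i - f i)) = phi f + phi (\<lambda>i. g i - f i)"
    using phi_add[OF assms(1) Sdiff[OF assms]] .
  thus ?thesis by simp
qed

lemma phi_zero: "phi (\<lambda>_. 0) = 0"
  using phi_add[OF S0 S0] by simp

lemma phi_neg: assumes "f \<in> S" shows "phi (\<lambda>i. - f i) = - phi f"
proof -
  have "phi (\<lambda>i. f i + - f i) = phi f + phi (\<lambda>i. - f i)" using phi_add[OF assms Sneg[OF assms]] .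
  hence "0 = phi f + phi (\<lambda>i. - f i)" using phi_zero by simp
  thus ?thesis by (simp add: eq_neg_iff_add_eq_0 add.commute)
qed

lemma phi_key: "f \<in> S \<Longrightarrow> phi f \<in> W N \<Longrightarrow> \<forall>i<N. f i = 0"
  using key limS by blast

lemma phi_small: "f \<in> S \<Longrightarrow> \<forall>i<Suc (Suc k). f i = 0 \<Longrightarrow> phi f \<in> W k"
  using small limS by blast

lemma phi_inj: "inj_on phi S"
proof (rule inj_onI)
  fix f g assume fg: "f \<in> S" "g \<in> S" "phi f = phi g"
  have "phi (\<lambda>i. g i - f i) = 0" using phi_diff[OF fg(1,2)] fg(3) by simp
  hence "\<forall>i<N. g i - f i = 0" for N using phi_key[OF Sdiff[OF fg(1,2)]] W0 by simp
  hence "g i = f i" for i by (metis lessI eq_iff_diff_eq_0)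
  thus "f = g" by auto
qed

lemma H_subgroup: "is_subgroup (phi ` S)"
  unfolding is_subgroup_def
proof (intro conjI ballI)
  show "0 \<in> phi ` S" using phi_zero[symmetric] S0 by (rule image_eqI)
next
  fix a b assume "a \<in> phi ` S" "b \<in> phi ` S"
  then obtain f g where fg: "f \<in> S" "g \<in> S" "a = phi f" "b = phi g" by blast
  hence "a + b = phi (\<lambda>i. f i + g i)" using phi_add[OF fg(1,2)] by simp
  thus "a + b \<in> phi ` S" using Sadd[OF fg(1,2)] by (rule image_eqI)
next
  fix a assume "a \<in> phi ` S"
  then obtain f where f: "f \<in> S" "a = phi f" by blast
  hence "- a = phi (\<lambda>i. - f i)" using phi_neg[OF f(1)] by simp
  thus "- a \<in> phi ` S" using Sneg[OF f(1)] by (rule image_eqI)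
qed

lemma phi_cont: "continuous_map (subtopology ZN_top S) T phi"
  unfolding continuous_map_def
proof (intro conjI allI impI)
  show "phi \<in> topspace (subtopology ZN_top S) \<rightarrow> topspace T" by simp
next
  fix V assume V: "openin T V"
  show "openin (subtopology ZN_top S) {f \<in> topspace (subtopology ZN_top S). phi f \<in> V}"
    unfolding openin_sub_ZN
  proof (intro conjI ballI)
    fix f assume "f \<in> {f \<in> topspace (subtopology ZN_top S). phi f \<in> V}"
    hence f: "f \<in> S" "phi f \<in> V" by auto
    have "openin T {z. phi f + z \<in> V}" using open_transl[OF V] .
    moreover have "0 \<in> {z. phi f + z \<in> V}" using f by simp
    ultimately obtain n0 where n0: "W n0 \<subseteq> {z. phi f + z \<in> V}" using Wsmall by blast
    have "phi g \<in> V" if g: "g \<in> S" "\<forall>i<Suc (Suc n0). g i = f i" for g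
    proof -
      have "\<forall>i<Suc (Suc n0). g i - f i = 0" using g(2) by simp
      hence "phi (\<lambda>i. g i - f i) \<in> W n0" using phi_small[OF Sdiff[OF f(1) g(1)]] by blast
      hence "phi f + phi (\<lambda>i. g i - f i) \<in> V" using n0 by blast
      thus ?thesis using phi_diff[OF f(1) g(1)] by simp
    qed
    thus "\<exists>N. \<forall>g\<in>S. (\<forall>i<N. g i = f i) \<longrightarrow> g \<in> {f \<in> topspace (subtopology ZN_top S). phi f \<in> V}"
      by (intro exI[of _ "Suc (Suc n0)"]) auto
  qed auto
qed

lemma phi_open: "open_map (subtopology ZN_top S) (subtopology T (phi ` S)) phi"
  unfolding open_map_def
proof (intro allI impI)
  fix U assume U: "openin (subtopology ZN_top S) U"
  have US: "U \<subseteq> S" and UN: "\<forall>f\<in>U. \<exists>N. \<forall>g\<in>S. (\<forall>i<N. g i = f i) \<longrightarrow> g \<in> U"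
    using U unfolding openin_sub_ZN by auto
  show "openin (subtopology T (phi ` S)) (phi ` U)"
  proof (subst openin_subopen, intro ballI)
    fix h assume "h \<in> phi ` U"
    then obtain f where f: "f \<in> U" "h = phi f" by blast
    obtain N where N: "\<forall>g\<in>S. (\<forall>i<N. g i = f i) \<longrightarrow> g \<in> U" using UN f(1) by blast
    define V where "V = {z. - phi f + z \<in> W N}"
    have "openin T V" unfolding V_def using open_transl[OF Wopen] .
    hence o: "openin (subtopology T (phi ` S)) (V \<inter> phi ` S)" by (auto simp: openin_subtopology)
    have hin: "h \<in> V \<inter> phi ` S" using f US W0 by (auto simp: V_def)
    have "V \<inter> phi ` S \<subseteq> phi ` U"
    proof
      fix z assume "z \<in> V \<inter> phi ` S"
      then obtain g where g: "g \<in> S" "z = phi g" "- phi f + phi g \<in> W N" by (auto simp: V_def)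
      have fS: "f \<in> S" using f US by blast
      have "phi (\<lambda>i. g i - f i) \<in> W N" using g(3) phi_diff[OF fS g(1)] by (simp add: algebra_simps)
      hence "\<forall>i<N. g i - f i = 0" using phi_key[OF Sdiff[OF fS g(1)]] by blast
      hence "g \<in> U" using N g(1) by simp
      thus "z \<in> phi ` U" using g(2) by blast
    qed
    thus "\<exists>T'. openin (subtopology T (phi ` S)) T' \<and> h \<in> T' \<and> T' \<subseteq> phi ` U" using o hin by blast
  qed
qed

lemma embed: "contains_top_iso T S"
  unfolding contains_top_iso_def
proof (intro exI[of _ "phi ` S"] exI[of _ phi] conjI)
  show "is_subgroup (phi ` S)" by (rule H_subgroup)
  show "phi ` S \<subseteq> topspace T" by simp
  show "phi ` S = phi ` S" ..
  show "inj_on phi S" by (rule phi_inj)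
  show "\<forall>f\<in>S. \<forall>g\<in>S. phi (\<lambda>i. f i + g i) = phi f + phi g" using phi_add by blast
  show "homeomorphic_map (subtopology ZN_top S) (subtopology T (phi ` S)) phi"
  proof (rule bijective_open_imp_homeomorphic_map)
    show "continuous_map (subtopology ZN_top S) (subtopology T (phi ` S)) phi"
      unfolding continuous_map_in_subtopology using phi_cont by auto
    show "open_map (subtopology ZN_top S) (subtopology T (phi ` S)) phi" by (rule phi_open)
    show "phi ` topspace (subtopology ZN_top S) = topspace (subtopology T (phi ` S))" by simp
    show "inj_on phi (topspace (subtopology ZN_top S))" using phi_inj by simp
  qed
qed

end
end


lemma converse:
  assumes tg: "ab_topgroup T"
    and S0: "(\<lambda>_. 0) \<in> S"
    and Sadd: "\<And>f g. f \<in> S \<Longrightarrow> g \<in> S \<Longrightarrow> (\<lambda>i. f i + g i) \<in> S"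
    and Sneg: "\<And>f. f \<in> S \<Longrightarrow> (\<lambda>i. - f i) \<in> S"
    and Se: "\<And>N. (\<lambda>i. if i = N then 1 else 0) \<in> S"
    and ci: "contains_top_iso (T::'a::ab_group_add topology) S"
  shows "\<not> NSS T"
proof
  interpret tgrp T by (unfold_locales) (fact tg)
  obtain H and \<phi> :: "(nat \<Rightarrow> int) \<Rightarrow> 'a" where
    h: "is_subgroup H" "\<phi> ` S = H" "inj_on \<phi> S"
      "\<forall>f\<in>S. \<forall>g\<in>S. \<phi> (\<lambda>i. f i + g i) = \<phi> f + \<phi> g"
      "homeomorphic_map (subtopology ZN_top S) (subtopology T H) \<phi>"
    using ci unfolding contains_top_iso_def by blast
  have p0: "\<phi> (\<lambda>_. 0) = 0"
  proof -
    have "\<phi> (\<lambda>i. 0 + 0) = \<phi> (\<lambda>_. 0) + \<phi> (\<lambda>_. 0)"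
      using h(4)[rule_format, OF S0 S0] .
    thus ?thesis by simp
  qed
  have pneg: "\<phi> (\<lambda>i. - f i) = - \<phi> f" if f: "f \<in> S" for f
  proof -
    have "\<phi> (\<lambda>i. f i + (\<lambda>i. - f i) i) = \<phi> f + \<phi> (\<lambda>i. - f i)" using h(4)[rule_format, OF f Sneg[OF f]] .
    hence "0 = \<phi> f + \<phi> (\<lambda>i. - f i)" using p0 by simp
    thus ?thesis by (simp add: eq_neg_iff_add_eq_0 add.commute)
  qed
  have "continuous_map (subtopology ZN_top S) (subtopology T H) \<phi>"
    using homeomorphic_imp_continuous_map[OF h(5)] .
  hence cont: "continuous_map (subtopology ZN_top S) T \<phi>"
    unfolding continuous_map_in_subtopology by blast
  assume "NSS T"
  then obtain U V where UV: "openin T V" "0 \<in> V" "V \<subseteq> U"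
     and triv: "\<And>K. is_subgroup K \<Longrightarrow> K \<subseteq> U \<Longrightarrow> K = {0}"
    unfolding NSS_def by blast
  have "openin (subtopology ZN_top S) {f \<in> topspace (subtopology ZN_top S). \<phi> f \<in> V}"
    using cont UV(1) unfolding continuous_map_def by blast
  moreover have "(\<lambda>_. 0) \<in> {f \<in> topspace (subtopology ZN_top S). \<phi> f \<in> V}"
    using S0 p0 UV(2) by simp
  ultimately obtain N where N: "\<forall>g\<in>S. (\<forall>i<N. g i = 0) \<longrightarrow> g \<in> {f \<in> topspace (subtopology ZN_top S). \<phi> f \<in> V}"
    unfolding openin_sub_ZN by blast
  define K where "K = \<phi> ` {g\<in>S. \<forall>i<N. g i = 0}"
  have "is_subgroup K" unfolding is_subgroup_def
  proof (intro conjI ballI)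
    show "0 \<in> K" unfolding K_def using p0[symmetric] S0 by (intro image_eqI) auto
  next
    fix a b assume "a \<in> K" "b \<in> K"
    then obtain f g where fg: "f \<in> S" "g \<in> S" "\<forall>i<N. f i = 0" "\<forall>i<N. g i = 0" "a = \<phi> f" "b = \<phi> g"
      unfolding K_def by blast
    hence "a + b = \<phi> (\<lambda>i. f i + g i)" using h(4) by simp
    moreover have "(\<lambda>i. f i + g i) \<in> {g\<in>S. \<forall>i<N. g i = 0}" using fg Sadd by simp
    ultimately show "a + b \<in> K" unfolding K_def by (rule image_eqI)
  next
    fix a assume "a \<in> K"
    then obtain f where f: "f \<in> S" "\<forall>i<N. f i = 0" "a = \<phi> f" unfolding K_def by blast
    hence "- a = \<phi> (\<lambda>i. - f i)" using pneg by simp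
    moreover have "(\<lambda>i. - f i) \<in> {g\<in>S. \<forall>i<N. g i = 0}" using f Sneg by simp
    ultimately show "- a \<in> K" unfolding K_def by (rule image_eqI)
  qed
  moreover have "K \<subseteq> U" using N UV(3) unfolding K_def by auto
  ultimately have K0: "K = {0}" using triv by blast
  define e where "e = (\<lambda>i::nat. if i = N then (1::int) else 0)"
  have "e \<in> {g\<in>S. \<forall>i<N. g i = 0}" using Se unfolding e_def by simp
  hence "\<phi> e \<in> K" unfolding K_def by blast
  hence "\<phi> e = \<phi> (\<lambda>_. 0)" using K0 p0 by simp
  hence "e = (\<lambda>_. 0)" using h(3) Se[of N] S0 unfolding e_def inj_on_def by blast
  hence "e N = 0" by simp
  thus False unfolding e_def by simp
qed

lemma ZN_fin_props:
  "(\<lambda>_. 0) \<in> ZN_fin" "\<And>f g. f \<in> ZN_fin \<Longrightarrow> g \<in> ZN_fin \<Longrightarrow> (\<lambda>i. f i + g i) \<in> ZN_fin"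
  "\<And>f. f \<in> ZN_fin \<Longrightarrow> (\<lambda>i. - f i) \<in> ZN_fin"
  "\<And>N. (\<lambda>i. if i = N then 1 else 0) \<in> ZN_fin"
proof -
  show "(\<lambda>_. 0) \<in> ZN_fin" by (simp add: ZN_fin_def)
  show "(\<lambda>i. f i + g i) \<in> ZN_fin" if "f \<in> ZN_fin" "g \<in> ZN_fin" for f g
  proof -
    have "{n. f n + g n \<noteq> 0} \<subseteq> {n. f n \<noteq> 0} \<union> {n. g n \<noteq> 0}" by auto
    thus ?thesis using that unfolding ZN_fin_def by (auto intro: finite_subset)
  qed
  show "(\<lambda>i. - f i) \<in> ZN_fin" if "f \<in> ZN_fin" for f using that by (simp add: ZN_fin_def)
  show "(\<lambda>i. if i = N then 1 else 0) \<in> ZN_fin" for N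
  proof -
    have "{n. (if n = N then 1 else 0::int) \<noteq> 0} = {N}" by auto
    thus ?thesis unfolding ZN_fin_def by simp
  qed
qed

theorem corollary8p3:
  fixes T :: "('a::ab_group_add) topology"
  assumes "ab_topgroup T"
    and "torsion_free TYPE('a)"
    and "metrizable_space T"
    and "\<forall>x. subtopology T (cyclic_subgroup x) = discrete_topology (cyclic_subgroup x)"
  shows "(\<not> NSS T \<longleftrightarrow> contains_top_iso T ZN_fin) \<and>
         (group_complete T \<longrightarrow> (\<not> NSS T \<longleftrightarrow> contains_top_iso T UNIV))"
proof -
  have c1: "contains_top_iso T ZN_fin \<Longrightarrow> \<not> NSS T"
    by (rule converse[OF assms(1) ZN_fin_props])
  have c2: "contains_top_iso T UNIV \<Longrightarrow> \<not> NSS T"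
    by (rule converse[OF assms(1)]) auto
  have d: "contains_top_iso T ZN_fin \<and> (group_complete T \<longrightarrow> contains_top_iso T UNIV)"
    if nn: "\<not> NSS T"
  proof -
    have "nss T" unfolding nss_def nss_axioms_def tgrp_def using assms nn by blast
    then interpret N: nss T .
    obtain B x W A where c: "\<forall>n. openin T (B n) \<and> 0 \<in> B n" "\<forall>U. openin T U \<and> 0 \<in> U \<longrightarrow> (\<exists>n. B n \<subseteq> U)"
      "A 0 = {0}" "\<forall>n. N.P (W n) (A n)" "\<forall>n. N.Q (W n) (A n) (B n) (x n) (W (Suc n))"
      "\<forall>n. A (Suc n) = extg (A n) (x n)"
      by (rule N.construction)
    have "emb T B x W A" unfolding emb_def emb_axioms_def using \<open>nss T\<close> c by blast
    then interpret E: emb T B x W A .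
    have "contains_top_iso T ZN_fin"
    proof (rule E.embed[OF ZN_fin_props(1-3)])
      fix f assume "f \<in> ZN_fin"
      thus "\<exists>y. limitin T (\<lambda>m. E.s m f) y sequentially"
        by (intro E.fin_lim) (simp add: ZN_fin_def)
    qed
    moreover have "contains_top_iso T UNIV" if gc: "group_complete T"
    proof (rule E.embed)
      fix f :: "nat \<Rightarrow> int"
      have "\<forall>U. openin T U \<and> 0 \<in> U \<longrightarrow> (\<exists>N. \<forall>m\<ge>N. \<forall>n\<ge>N. E.s m f - E.s n f \<in> U)"
        using E.cauchy by blast
      thus "\<exists>y. limitin T (\<lambda>m. E.s m f) y sequentially"
        by (rule mp[OF spec[OF gc[unfolded group_complete_def], of "\<lambda>m. E.s m f"]])
    qed simp_all
    ultimately show ?thesis by blast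
  qed
  show ?thesis using c1 c2 d by blast
qed


end
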